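(* Let $F$ be $(\ell,\omega)$-relatively smooth on $\mathcal X\cap\mathcal S$. Then for any $\rho\ge2\ell$ and $x\in\mathcal X\cap\mathcal S$ we have $\Phi_{1/\rho}(x)\ge\Phi(x^+)$, where $x^+:=\arg\min_{y\in\mathcal X}\langle\nabla F(x),y\rangle+r(y)+(\rho-\ell)D_\omega(y,x)$.
   Context: Let $\mathcal X\subseteq\mathbb R^d$ be closed and convex, $\|\cdot\|$ a norm on $\mathbb R^d$. The problem is $\min_{x\in\mathcal X}\Phi(x):=F(x)+r(x)$, with $F$ differentiable and $r:\mathbb R^d\to\mathbb R$ convex, proper, lower semicontinuous. A DGF is $\omega:\mathrm{cl}(\mathcal S)\to\mathbb R$, $\mathcal S$ open with $\mathrm{ri}(\mathcal X)\subseteq\mathcal S$, $\omega$ continuously differentiable on $\mathcal S$ and $1$-strongly convex w.r.t. $\|\cdot\|$ on $\mathrm{cl}(\mathcal S)$; $D_\omega(x,y)=\omega(x)-\omega(y)-\langle\nabla\omega(y),x-y\rangle$. Bregman Moreau envelope: $\Phi_{1/\rho}(x):=\min_{y\in\mathcal X}[\Phi(y)+\rho D_\omega(y,x)]$ (minimizers assumed to exist). $F$ is $(\ell,\omega)$-relatively smooth on $\mathcal X\cap\mathcal S$ if for all $x,y\in\mathcal X\cap\mathcal S$: $-\ell D_\omega(x,y)\le F(x)-F(y)-\langle\nabla F(y),x-y\rangle\le\ell D_\omega(x,y)$. *)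

theory Defs
  imports "HOL-Analysis.Analysis"
begin

definition is_norm :: "('a::euclidean_space \<Rightarrow> real) \<Rightarrow> bool" where
  "is_norm N \<longleftrightarrow> (\<forall>x. 0 \<le> N x) \<and> (\<forall>x. N x = 0 \<longleftrightarrow> x = 0)
     \<and> (\<forall>c x. N (c *\<^sub>R x) = \<bar>c\<bar> * N x) \<and> (\<forall>x y. N (x + y) \<le> N x + N y)"

definition lsc :: "('a::topological_space \<Rightarrow> real) \<Rightarrow> bool" where
  "lsc f \<longleftrightarrow> (\<forall>c. closed {x. f x \<le> c})"

definition strongly_convex_on :: "'a::euclidean_space set \<Rightarrow> ('a \<Rightarrow> real) \<Rightarrow> ('a \<Rightarrow> real) \<Rightarrow> bool" where
  "strongly_convex_on C N w \<longleftrightarrow> convex C \<and>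
     (\<forall>x\<in>C. \<forall>y\<in>C. \<forall>t::real. 0 \<le> t \<and> t \<le> 1 \<longrightarrow>
        w (t *\<^sub>R x + (1 - t) *\<^sub>R y) \<le> t * w x + (1 - t) * w y - t * (1 - t) / 2 * (N (x - y))\<^sup>2)"

definition is_DGF :: "'a::euclidean_space set \<Rightarrow> ('a \<Rightarrow> real) \<Rightarrow> 'a set \<Rightarrow> ('a \<Rightarrow> real) \<Rightarrow> ('a \<Rightarrow> 'a) \<Rightarrow> bool" where
  "is_DGF X N S w gw \<longleftrightarrow> open S \<and> rel_interior X \<subseteq> S
     \<and> (\<forall>y\<in>S. (w has_derivative (\<lambda>h. gw y \<bullet> h)) (at y)) \<and> continuous_on S gw
     \<and> strongly_convex_on (closure S) N w"

definition bregman :: "('a::euclidean_space \<Rightarrow> real) \<Rightarrow> ('a \<Rightarrow> 'a) \<Rightarrow> 'a \<Rightarrow> 'a \<Rightarrow> real" where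
  "bregman w gw x y = w x - w y - gw y \<bullet> (x - y)"

text \<open>Bregman Moreau envelope \<Phi>_{1/\<rho>}(x) = min_{y\<in>X} [\<Phi> y + \<rho> D(y,x)].\<close>
definition moreau_env :: "'a::euclidean_space set \<Rightarrow> ('a \<Rightarrow> real) \<Rightarrow> ('a \<Rightarrow> real) \<Rightarrow> ('a \<Rightarrow> 'a) \<Rightarrow> real \<Rightarrow> 'a \<Rightarrow> real" where
  "moreau_env X Phi w gw \<rho> x = (INF y\<in>X. Phi y + \<rho> * bregman w gw y x)"

definition rel_smooth :: "'a::euclidean_space set \<Rightarrow> ('a \<Rightarrow> real) \<Rightarrow> ('a \<Rightarrow> 'a) \<Rightarrow> real \<Rightarrow> ('a \<Rightarrow> real) \<Rightarrow> ('a \<Rightarrow> 'a) \<Rightarrow> bool" where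
  "rel_smooth C F gF l w gw \<longleftrightarrow> (\<forall>x\<in>C. \<forall>y\<in>C.
     - l * bregman w gw x y \<le> F x - F y - gF y \<bullet> (x - y) \<and>
     F x - F y - gF y \<bullet> (x - y) \<le> l * bregman w gw x y)"

end

theory Submission
  imports Defs
begin

lemma tangent_sc:
  fixes S :: "'a::euclidean_space set" and w N :: "'a \<Rightarrow> real" and gw :: "'a \<Rightarrow> 'a"
  assumes sc: "strongly_convex_on (closure S) N w"
    and d: "(w has_derivative (\<lambda>h. gw x \<bullet> h)) (at x)"
    and x: "x \<in> closure S" and y: "y \<in> closure S"
  shows "(N (y - x))\<^sup>2 / 2 \<le> bregman w gw y x"
proof -
  let ?f = "\<lambda>t::real. w (x + t *\<^sub>R (y - x))"
  have "((\<lambda>t. x + t *\<^sub>R (y - x)) has_derivative (\<lambda>t. t *\<^sub>R (y - x))) (at 0)"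
    by (auto intro!: derivative_eq_intros)
  moreover have "(w has_derivative (\<lambda>h. gw x \<bullet> h)) (at (x + 0 *\<^sub>R (y - x)))" using d by simp
  ultimately have "(?f has_derivative (\<lambda>t. gw x \<bullet> (t *\<^sub>R (y - x)))) (at 0)"
    by (rule has_derivative_compose)
  then have "(?f has_real_derivative (gw x \<bullet> (y - x))) (at 0)"
    by (simp add: has_field_derivative_def mult.commute[of _ "gw x \<bullet> (y - x)"])
  then have lim: "((\<lambda>t. (?f t - ?f 0) / t) \<longlongrightarrow> gw x \<bullet> (y - x)) (at_right 0)"
    unfolding DERIV_def by (auto intro: tendsto_mono[OF at_le] simp: )
  have lim2: "((\<lambda>t. w y - w x - (1 - t) / 2 * (N (y - x))\<^sup>2) \<longlongrightarrow> w y - w x - (1 - 0) / 2 * (N (y - x))\<^sup>2) (at_right 0)"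
    by (intro tendsto_intros) auto
  have ev: "eventually (\<lambda>t. (?f t - ?f 0) / t \<le> w y - w x - (1 - t) / 2 * (N (y - x))\<^sup>2) (at_right (0::real))"
    unfolding eventually_at_right[OF zero_less_one]
  proof (intro exI[of _ 1] conjI allI impI)
    fix t :: real assume t: "0 < t" "t < 1"
    have "x + t *\<^sub>R (y - x) = t *\<^sub>R y + (1 - t) *\<^sub>R x" by (simp add: algebra_simps)
    then have "?f t \<le> t * w y + (1 - t) * w x - t * (1 - t) / 2 * (N (y - x))\<^sup>2"
      using sc x y t unfolding strongly_convex_on_def by auto
    then have "?f t - ?f 0 \<le> t * (w y - w x - (1 - t) / 2 * (N (y - x))\<^sup>2)"
      by (simp add: algebra_simps)
    then show "(?f t - ?f 0) / t \<le> w y - w x - (1 - t) / 2 * (N (y - x))\<^sup>2"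
      using t by (simp add: divide_le_eq mult.commute)
  qed simp
  have "gw x \<bullet> (y - x) \<le> w y - w x - (1 - 0) / 2 * (N (y - x))\<^sup>2"
    by (rule tendsto_le[OF trivial_limit_at_right_real lim2 lim ev])
  then show ?thesis unfolding bregman_def by simp
qed

theorem lemma8:
  fixes X S :: "'a::euclidean_space set"
    and N w F r :: "'a \<Rightarrow> real" and gw gF :: "'a \<Rightarrow> 'a"
    and l \<rho> :: real and x xp :: 'a
  assumes X: "closed X" "convex X"
    and N: "is_norm N"
    and dgf: "is_DGF X N S w gw"
    and F: "\<And>y. (F has_derivative (\<lambda>h. gF y \<bullet> h)) (at y)"
    and r: "convex_on UNIV r" "lsc r"
    and smooth: "rel_smooth (X \<inter> S) F gF l w gw"
    and rho: "\<rho> \<ge> 2 * l"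
    and x: "x \<in> X \<inter> S"
    and env_min: "\<exists>y\<in>X. \<forall>z\<in>X. F y + r y + \<rho> * bregman w gw y x \<le> F z + r z + \<rho> * bregman w gw z x"
    and xp: "xp \<in> X"
    and xp_min: "\<forall>y\<in>X. gF x \<bullet> xp + r xp + (\<rho> - l) * bregman w gw xp x
                        \<le> gF x \<bullet> y + r y + (\<rho> - l) * bregman w gw y x"
  shows "moreau_env X (\<lambda>y. F y + r y) w gw \<rho> x \<ge> F xp + r xp"
proof -
  have Sopen: "open S" and riS: "rel_interior X \<subseteq> S"
    and wd: "\<And>y. y \<in> S \<Longrightarrow> (w has_derivative (\<lambda>h. gw y \<bullet> h)) (at y)"
    and sc: "strongly_convex_on (closure S) N w"
    using dgf unfolding is_DGF_def by auto
  have Xne: "X \<noteq> {}" using x by auto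
  have XclS: "X \<subseteq> closure S"
  proof -
    have "X = closure (rel_interior X)" using convex_closure_rel_interior[OF X(2)] X(1) closure_closed by metis
    also have "\<dots> \<subseteq> closure S" using riS closure_mono by blast
    finally show ?thesis .
  qed
  have xS: "x \<in> S" using x by auto
  have D0: "\<And>y. y \<in> X \<Longrightarrow> (N (y - x))\<^sup>2 / 2 \<le> bregman w gw y x"
    using tangent_sc[of S N w gw x, OF sc wd[OF xS]] XclS xS closure_subset by blast
  have Dnn: "\<And>y. y \<in> X \<Longrightarrow> 0 \<le> bregman w gw y x"
    using D0 by (smt (verit) zero_le_power2 divide_nonneg_pos)
  obtain c where c: "c \<in> rel_interior X" using rel_interior_eq_empty[OF X(2)] Xne by blast
  have cX: "c \<in> X" using c rel_interior_subset by blast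
  define h where "h y = F y - F x - gF x \<bullet> (y - x)" for y
  show ?thesis
  proof (cases "l < 0")
    case True
    have XS1: "\<And>y. y \<in> X \<inter> S \<Longrightarrow> y = x"
    proof -
      fix y assume y: "y \<in> X \<inter> S"
      have "- l * bregman w gw y x \<le> l * bregman w gw y x"
        using smooth y x unfolding rel_smooth_def by (meson order_trans)
      then have "0 \<le> l * bregman w gw y x" by linarith
      then have "bregman w gw y x \<le> 0" using True
        by (simp add: zero_le_mult_iff)
      moreover have "(N (y - x))\<^sup>2 / 2 \<le> bregman w gw y x" using D0[of y] y by blast
      ultimately have "(N (y - x))\<^sup>2 \<le> 0" by linarith
      then have "N (y - x) = 0" by simp
      then show "y = x" using N unfolding is_norm_def by auto
    qed
    have Xx: "X = {x}"
    proof -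
      { fix y assume y: "y \<in> X"
        have a: "\<And>e::real. 0 < e \<Longrightarrow> e \<le> 1 \<Longrightarrow> y - e *\<^sub>R (y - c) = x"
          using rel_interior_closure_convex_shrink[OF X(2) c] y closure_subset riS
            rel_interior_subset XS1 by blast
        have "c = x" using a[of 1] by simp
        moreover have "y - (1/2) *\<^sub>R (y - c) = x" using a[of "1/2"] by simp
        ultimately have "y = x" by (simp add: algebra_simps)
      }
      then show ?thesis using x by auto
    qed
    show ?thesis unfolding moreau_env_def Xx using Xx xp by (simp add: bregman_def)
  next
    case False
    then have l0: "0 \<le> l" by simp
    have hb: "\<bar>h y\<bar> \<le> l * bregman w gw y x" if y: "y \<in> X" for y
    proof -
      let ?y = "\<lambda>t::real. y - t *\<^sub>R (y - c)"
      have contF: "continuous_on UNIV F" using F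
        by (meson continuous_on_eq_continuous_at has_derivative_continuous open_UNIV)
      have "continuous_on UNIV (\<lambda>t::real. \<bar>h (?y t)\<bar>)"
        unfolding h_def
        by (intro continuous_intros continuous_on_compose2[OF contF]) auto
      then have "((\<lambda>t::real. \<bar>h (?y t)\<bar>) \<longlongrightarrow> \<bar>h (?y 0)\<bar>) (at 0)"
        unfolding continuous_on_def by blast
      then have lim1: "((\<lambda>t::real. \<bar>h (?y t)\<bar>) \<longlongrightarrow> \<bar>h y\<bar>) (at_right 0)"
        by (auto intro: tendsto_mono[OF at_le])
      have lim2: "((\<lambda>t::real. l * ((1 - t) * bregman w gw y x + t * bregman w gw c x))
         \<longlongrightarrow> l * ((1 - 0) * bregman w gw y x + 0 * bregman w gw c x)) (at_right 0)"
        by (intro tendsto_intros)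
      have ev: "eventually (\<lambda>t. \<bar>h (?y t)\<bar> \<le> l * ((1 - t) * bregman w gw y x + t * bregman w gw c x)) (at_right (0::real))"
        unfolding eventually_at_right[OF zero_less_one]
      proof (intro exI[of _ 1] conjI allI impI)
        fix t :: real assume t: "0 < t" "t < 1"
        have "?y t \<in> rel_interior X"
          using rel_interior_closure_convex_shrink[OF X(2) c, of y t] y closure_subset t by auto
        then have yt: "?y t \<in> X \<inter> S" using riS rel_interior_subset by blast
        have eq: "?y t = t *\<^sub>R c + (1 - t) *\<^sub>R y" by (simp add: algebra_simps)
        have "w (?y t) \<le> t * w c + (1 - t) * w y - t * (1 - t) / 2 * (N (c - y))\<^sup>2"
          unfolding eq using sc XclS y cX t unfolding strongly_convex_on_def
          by (meson less_eq_real_def subsetD)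
        moreover have "0 \<le> t * (1 - t) / 2 * (N (c - y))\<^sup>2" using t by auto
        ultimately have "w (?y t) \<le> t * w c + (1 - t) * w y" by linarith
        then have Db: "bregman w gw (?y t) x \<le> (1 - t) * bregman w gw y x + t * bregman w gw c x"
          unfolding bregman_def eq by (simp add: algebra_simps inner_diff_right)
        have "\<bar>h (?y t)\<bar> \<le> l * bregman w gw (?y t) x"
        proof -
          have "- l * bregman w gw (?y t) x \<le> h (?y t) \<and> h (?y t) \<le> l * bregman w gw (?y t) x"
            using smooth yt x unfolding rel_smooth_def h_def by blast
          then show ?thesis by (simp add: abs_le_iff)
        qed
        also have "\<dots> \<le> l * ((1 - t) * bregman w gw y x + t * bregman w gw c x)"
          using Db l0 by (rule mult_left_mono)
        finally show "\<bar>h (?y t)\<bar> \<le> l * ((1 - t) * bregman w gw y x + t * bregman w gw c x)" .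
      qed simp
      have "\<bar>h y\<bar> \<le> l * ((1 - 0) * bregman w gw y x + 0 * bregman w gw c x)"
        by (rule tendsto_le[OF trivial_limit_at_right_real lim2 lim1 ev])
      then show ?thesis by simp
    qed
    show ?thesis unfolding moreau_env_def
    proof (rule cINF_greatest[OF Xne])
      fix z assume z: "z \<in> X"
      have hz: "F z \<ge> F x + gF x \<bullet> (z - x) - l * bregman w gw z x"
        using hb[OF z] unfolding h_def by (simp add: abs_le_iff)
      have hxp: "F xp \<le> F x + gF x \<bullet> (xp - x) + l * bregman w gw xp x"
        using hb[OF xp] unfolding h_def by (simp add: abs_le_iff)
      have m: "gF x \<bullet> xp + r xp + (\<rho> - l) * bregman w gw xp x
                        \<le> gF x \<bullet> z + r z + (\<rho> - l) * bregman w gw z x"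
        using xp_min z by blast
      have "0 \<le> (\<rho> - 2 * l) * bregman w gw xp x" using rho Dnn[OF xp] by simp
      then show "F xp + r xp \<le> F z + r z + \<rho> * bregman w gw z x"
        using hz hxp m by (simp add: inner_diff_right algebra_simps)
    qed
  qed
qed

end
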